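(* Let $\mathcal M,\mathcal M'$ be spin models. An emulation $\mathcal M\to\mathcal M'$ induces a polynomial-time (many-one) reduction $r$ from $\textsc{Gse}_{\mathcal M'}$ to $\textsc{Gse}_{\mathcal M}$.
   Context: A spin system $S=(q_S,V_S,E_S,J_S)$: integer $q_S\ge2$, finite $V_S$, hyperedges $E_S\subseteq\mathcal P(V_S)$ covering $V_S$, $J_S(e):[q_S]^e\to\mathbb R_{\ge0}$. $\mathcal C_S=[q_S]^{V_S}$, $H_S(\vec s)=\sum_eJ_S(e)(\vec s|_e)$, $|S|=\sum_eq_S^{|e|}$. A spin model is a set of spin systems of common spin type closed under isomorphism (relabeling of spins preserving hyperedges and interactions). Simulation $\mathcal f:S\to T$: data $\Delta>0,\Gamma\in\mathbb R,d\in\mathbb N$, $P:V_T\to V_S^k$, $\mathrm{dec}:[q_S]^k\to[q_T]$, $\mathrm{enc}=(\mathrm{enc}_i)_{i\le m}$, $\mathrm{enc}_i:[q_T]\to[q_S]^k$, with: (1) $P^{(i)}(v)=P^{(j)}(w)\Rightarrow i=j,v=w$; (2) $\mathrm{dec}\circ\mathrm{enc}_i=\mathrm{id}$; (3) $\mathrm{enc}_i(t)=\mathrm{enc}_j(t)\Rightarrow i=j$; (4) with $\mathrm{sim}_i(\vec t)=\{\vec s:\vec s\circ P=\mathrm{enc}_i\circ\vec t,\ H_S(\vec s)-\Gamma<\Delta\}$ (componentwise), $|\mathrm{sim}_i(\vec t)|=d$ whenever $H_T(\vec t)<\Delta$; (5) $H_S(\vec s)-\Gamma=H_T(\vec t)$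 for $\vec s\in\bigcup_i\mathrm{sim}_i(\vec t)$, and $H_S(\vec s)-\Gamma\ge\Delta$ for $\vec s$ in no $\mathrm{sim}_i(\vec t)$. An emulation $\mathcal M\to\mathcal M'$ is an algorithm (real-RAM model: real arithmetic, exp, log unit cost) which on input $(T,\delta)$, $T\in\mathcal M'$, $\delta\ge0$, outputs in time polynomial in $|T|$ a spin system $S\in\mathcal M$ and a simulation $S\to T$ with cut-off $\delta$; for fixed $T$ the hypergraph of $S$ is independent of $\delta$ and the simulations differ only in the shift; decoding and encodings depend only on $q_T$. $\textsc{Gse}_{\mathcal M}$ is the decision problem with yes-instances $\{(S,k): S\in\mathcal M,\ k\in\mathbb R,\ \min H_S<k\}$. Polynomial time is understood in the real-RAM model. *)

theory Defs
  imports Complex_Main "HOL-Library.List_Lexorder"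
begin

text \<open>Spins are [q] = {0..<q}; vertices are natural
numbers (every spin model is closed under isomorphism, so this is no loss).\<close>

record spin_sys =
  sq :: nat
  sV :: "nat set"
  sE :: "nat set set"
  sJ :: "nat set \<Rightarrow> (nat \<Rightarrow> nat) \<Rightarrow> real"

definition cfgs :: "nat \<Rightarrow> nat set \<Rightarrow> (nat \<Rightarrow> nat) set" where
  "cfgs q A = {s. (\<forall>v\<in>A. s v < q) \<and> (\<forall>v. v \<notin> A \<longrightarrow> s v = 0)}"

definition restr :: "(nat \<Rightarrow> nat) \<Rightarrow> nat set \<Rightarrow> nat \<Rightarrow> nat" where
  "restr s A = (\<lambda>v. if v \<in> A then s v else 0)"

definition wf_spin :: "spin_sys \<Rightarrow> bool" where
  "wf_spin S \<longleftrightarrow> sq S \<ge> 2 \<and> finite (sV S) \<and> sE S \<subseteq> Pow (sV S) \<and> \<Union>(sE S) = sV S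
     \<and> (\<forall>e\<in>sE S. \<forall>c\<in>cfgs (sq S) e. sJ S e c \<ge> 0)"

definition conf :: "spin_sys \<Rightarrow> (nat \<Rightarrow> nat) set" where
  "conf S = cfgs (sq S) (sV S)"

definition Ham :: "spin_sys \<Rightarrow> (nat \<Rightarrow> nat) \<Rightarrow> real" where
  "Ham S s = (\<Sum>e\<in>sE S. sJ S e (restr s e))"

definition ssize :: "spin_sys \<Rightarrow> nat" where
  "ssize S = (\<Sum>e\<in>sE S. sq S ^ card e)"

definition spin_iso :: "spin_sys \<Rightarrow> spin_sys \<Rightarrow> bool" where
  "spin_iso S S' \<longleftrightarrow> sq S = sq S' \<and> (\<exists>\<pi>. bij_betw \<pi> (sV S) (sV S')
      \<and> sE S' = (\<lambda>e. \<pi> ` e) ` sE S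
      \<and> (\<forall>e\<in>sE S. \<forall>c\<in>cfgs (sq S) e.
            sJ S' (\<pi> ` e) (\<lambda>w. if w \<in> \<pi> ` e then c (the_inv_into (sV S) \<pi> w) else 0) = sJ S e c))"

definition spin_model :: "spin_sys set \<Rightarrow> bool" where
  "spin_model M \<longleftrightarrow> (\<forall>S\<in>M. wf_spin S)
     \<and> (\<forall>S S'. S \<in> M \<longrightarrow> wf_spin S' \<longrightarrow> spin_iso S S' \<longrightarrow> S' \<in> M)"

definition gse :: "spin_sys \<Rightarrow> real \<Rightarrow> bool" where
  "gse S k \<longleftrightarrow> Min (Ham S ` conf S) < k"

record sim_data =
  sDelta :: real
  sGamma :: real
  sd :: nat
  sk :: nat
  sP :: "nat \<Rightarrow> nat list"
  sdec :: "nat list \<Rightarrow> nat"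
  senc :: "(nat \<Rightarrow> nat list) list"

definition tuples :: "nat \<Rightarrow> nat \<Rightarrow> nat list set" where
  "tuples q k = {xs. length xs = k \<and> (\<forall>x\<in>set xs. x < q)}"

definition simset :: "spin_sys \<Rightarrow> spin_sys \<Rightarrow> sim_data \<Rightarrow> nat \<Rightarrow> (nat \<Rightarrow> nat) \<Rightarrow> (nat \<Rightarrow> nat) set" where
  "simset S T f i t = {s \<in> conf S. (\<forall>v\<in>sV T. \<forall>j<sk f. s (sP f v ! j) = (senc f ! i) (t v) ! j)
                                  \<and> Ham S s - sGamma f < sDelta f}"

definition is_simulation :: "spin_sys \<Rightarrow> spin_sys \<Rightarrow> sim_data \<Rightarrow> bool" where
  "is_simulation S T f \<longleftrightarrow>
     sDelta f > 0 \<and> sd f \<ge> 1 \<and> senc f \<noteq> []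
     \<and> (\<forall>v\<in>sV T. length (sP f v) = sk f \<and> set (sP f v) \<subseteq> sV S)
     \<and> (\<forall>xs\<in>tuples (sq S) (sk f). sdec f xs < sq T)
     \<and> (\<forall>i<length (senc f). \<forall>t<sq T. (senc f ! i) t \<in> tuples (sq S) (sk f))
     \<comment> \<open>(1)\<close>
     \<and> (\<forall>v\<in>sV T. \<forall>w\<in>sV T. \<forall>i<sk f. \<forall>j<sk f. sP f v ! i = sP f w ! j \<longrightarrow> i = j \<and> v = w)
     \<comment> \<open>(2)\<close>
     \<and> (\<forall>i<length (senc f). \<forall>t<sq T. sdec f ((senc f ! i) t) = t)
     \<comment> \<open>(3)\<close>
     \<and> (\<forall>i<length (senc f). \<forall>j<length (senc f). \<forall>t<sq T. (senc f ! i) t = (senc f ! j) t \<longrightarrow> i = j)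
     \<comment> \<open>(4)\<close>
     \<and> (\<forall>i<length (senc f). \<forall>t\<in>conf T. Ham T t < sDelta f \<longrightarrow> card (simset S T f i t) = sd f)
     \<comment> \<open>(5)\<close>
     \<and> (\<forall>i<length (senc f). \<forall>t\<in>conf T. \<forall>s\<in>simset S T f i t. Ham S s - sGamma f = Ham T t)
     \<and> (\<forall>s\<in>conf S. (\<forall>i<length (senc f). \<forall>t\<in>conf T. s \<notin> simset S T f i t)
           \<longrightarrow> Ham S s - sGamma f \<ge> sDelta f)"

text \<open>Data are trees (S-expressions) whose leaves are reals; programs are
first-order combinators with unit-cost real arithmetic, exp and log, branching
and while loops. ev p x y n : program p on input x halts with output y after n steps.\<close>

datatype val = VNum real | VNil | VPair val val

datatype prim = PAdd | PSub | PMul | PDiv | PLess | PEq | PExp | PLn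

datatype prog = PId | PInt int | PNilC | PFst | PSnd | PIsPair | PPrim prim
  | PComp prog prog | PFork prog prog | PCond prog prog prog | PWhile prog prog

fun prim_app :: "prim \<Rightarrow> val \<Rightarrow> val option" where
  "prim_app PAdd (VPair (VNum a) (VNum b)) = Some (VNum (a + b))"
| "prim_app PSub (VPair (VNum a) (VNum b)) = Some (VNum (a - b))"
| "prim_app PMul (VPair (VNum a) (VNum b)) = Some (VNum (a * b))"
| "prim_app PDiv (VPair (VNum a) (VNum b)) = (if b = 0 then None else Some (VNum (a / b)))"
| "prim_app PLess (VPair (VNum a) (VNum b)) = Some (VNum (if a < b then 1 else 0))"
| "prim_app PEq (VPair (VNum a) (VNum b)) = Some (VNum (if a = b then 1 else 0))"
| "prim_app PExp (VNum a) = Some (VNum (exp a))"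
| "prim_app PLn (VNum a) = (if a > 0 then Some (VNum (ln a)) else None)"
| "prim_app _ _ = None"

inductive ev :: "prog \<Rightarrow> val \<Rightarrow> val \<Rightarrow> nat \<Rightarrow> bool" where
  ev_id: "ev PId v v 1"
| ev_int: "ev (PInt i) v (VNum (of_int i)) 1"
| ev_nil: "ev PNilC v VNil 1"
| ev_fst: "ev PFst (VPair a b) a 1"
| ev_snd: "ev PSnd (VPair a b) b 1"
| ev_ispair: "ev PIsPair v (VNum (case v of VPair _ _ \<Rightarrow> 1 | _ \<Rightarrow> 0)) 1"
| ev_prim: "prim_app op v = Some w \<Longrightarrow> ev (PPrim op) v w 1"
| ev_comp: "ev q v w n \<Longrightarrow> ev p w u m \<Longrightarrow> ev (PComp p q) v u (n + m + 1)"
| ev_fork: "ev p v a n \<Longrightarrow> ev q v b m \<Longrightarrow> ev (PFork p q) v (VPair a b) (n + m + 1)"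
| ev_cond_t: "ev b v (VNum x) n \<Longrightarrow> x \<noteq> 0 \<Longrightarrow> ev p v w m \<Longrightarrow> ev (PCond b p q) v w (n + m + 1)"
| ev_cond_f: "ev b v (VNum 0) n \<Longrightarrow> ev q v w m \<Longrightarrow> ev (PCond b p q) v w (n + m + 1)"
| ev_while_f: "ev b v (VNum 0) n \<Longrightarrow> ev (PWhile b p) v v (n + 1)"
| ev_while_t: "ev b v (VNum x) n \<Longrightarrow> x \<noteq> 0 \<Longrightarrow> ev p v w m \<Longrightarrow> ev (PWhile b p) w u l
     \<Longrightarrow> ev (PWhile b p) v u (n + m + l + 1)"

definition enc_list :: "val list \<Rightarrow> val" where
  "enc_list xs = foldr VPair xs VNil"

definition enc_nat :: "nat \<Rightarrow> val" where
  "enc_nat n = VNum (real n)"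

definition enc_nats :: "nat list \<Rightarrow> val" where
  "enc_nats xs = enc_list (map enc_nat xs)"

definition cfg_of :: "nat list \<Rightarrow> nat list \<Rightarrow> nat \<Rightarrow> nat" where
  "cfg_of es xs = (\<lambda>v. case map_of (zip es xs) v of Some x \<Rightarrow> x | None \<Rightarrow> 0)"

text \<open>Hyperedge e (as sorted vertex list) with its interaction table J(e) listed over [q]^e.\<close>
definition enc_edge :: "spin_sys \<Rightarrow> nat list \<Rightarrow> val" where
  "enc_edge S es = VPair (enc_nats es)
      (enc_list (map (\<lambda>xs. VNum (sJ S (set es) (cfg_of es xs))) (List.n_lists (length es) [0..<sq S])))"

definition enc_sys :: "spin_sys \<Rightarrow> val" where
  "enc_sys S = enc_list [enc_nat (sq S), enc_nats (sorted_list_of_set (sV S)),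
      enc_list (map (enc_edge S) (sorted_list_of_set (sorted_list_of_set ` sE S)))]"

definition enc_sim :: "spin_sys \<Rightarrow> spin_sys \<Rightarrow> sim_data \<Rightarrow> val" where
  "enc_sim S T f = enc_list [VNum (sDelta f), VNum (sGamma f), enc_nat (sd f), enc_nat (sk f),
      enc_list (map (\<lambda>v. enc_nats (sP f v)) (sorted_list_of_set (sV T))),
      enc_list (map (\<lambda>xs. enc_nat (sdec f xs)) (List.n_lists (sk f) [0..<sq S])),
      enc_list (map (\<lambda>g. enc_list (map (\<lambda>t. enc_nats (g t)) [0..<sq T])) (senc f))]"

definition enc_inst :: "spin_sys \<Rightarrow> real \<Rightarrow> val" where
  "enc_inst S k = VPair (enc_sys S) (VNum k)"

definition same_sim_maps :: "nat \<Rightarrow> nat \<Rightarrow> sim_data \<Rightarrow> sim_data \<Rightarrow> bool" where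
  "same_sim_maps qS qT f g \<longleftrightarrow> sk f = sk g \<and> length (senc f) = length (senc g)
     \<and> (\<forall>xs\<in>tuples qS (sk f). sdec f xs = sdec g xs)
     \<and> (\<forall>i<length (senc f). \<forall>t<qT. (senc f ! i) t = (senc g ! i) t)"

definition emulation :: "spin_sys set \<Rightarrow> spin_sys set \<Rightarrow> prog \<Rightarrow> bool" where
  "emulation M M' A \<longleftrightarrow>
     (\<exists>a b::nat. \<forall>T\<in>M'. \<forall>\<delta>::real. \<delta> \<ge> 0 \<longrightarrow>
        (\<exists>S f n. ev A (VPair (enc_sys T) (VNum \<delta>)) (VPair (enc_sys S) (enc_sim S T f)) n
           \<and> n \<le> a * (ssize T + 1) ^ b
           \<and> S \<in> M \<and> is_simulation S T f \<and> sDelta f \<ge> \<delta>))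
   \<and> (\<forall>T\<in>M'. \<forall>\<delta>1 \<delta>2 S1 S2 f1 f2 n1 n2. \<delta>1 \<ge> 0 \<longrightarrow> \<delta>2 \<ge> 0 \<longrightarrow>
        ev A (VPair (enc_sys T) (VNum \<delta>1)) (VPair (enc_sys S1) (enc_sim S1 T f1)) n1 \<longrightarrow>
        ev A (VPair (enc_sys T) (VNum \<delta>2)) (VPair (enc_sys S2) (enc_sim S2 T f2)) n2 \<longrightarrow>
        sq S1 = sq S2 \<and> sV S1 = sV S2 \<and> sE S1 = sE S2
        \<and> sd f1 = sd f2 \<and> (\<forall>v\<in>sV T. sP f1 v = sP f2 v) \<and> same_sim_maps (sq S1) (sq T) f1 f2)
   \<and> (\<forall>T1\<in>M'. \<forall>T2\<in>M'. \<forall>\<delta>1 \<delta>2 S1 S2 f1 f2 n1 n2. sq T1 = sq T2 \<longrightarrow> \<delta>1 \<ge> 0 \<longrightarrow> \<delta>2 \<ge> 0 \<longrightarrow>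
        ev A (VPair (enc_sys T1) (VNum \<delta>1)) (VPair (enc_sys S1) (enc_sim S1 T1 f1)) n1 \<longrightarrow>
        ev A (VPair (enc_sys T2) (VNum \<delta>2)) (VPair (enc_sys S2) (enc_sim S2 T2 f2)) n2 \<longrightarrow>
        sq S1 = sq S2 \<and> same_sim_maps (sq S1) (sq T1) f1 f2)"

definition poly_reduction :: "spin_sys set \<Rightarrow> spin_sys set \<Rightarrow> prog \<Rightarrow> bool" where
  "poly_reduction M' M R \<longleftrightarrow>
     (\<exists>a b::nat. \<forall>T\<in>M'. \<forall>k::real. \<exists>S k' n.
        ev R (enc_inst T k) (enc_inst S k') n \<and> n \<le> a * (ssize T + 1) ^ b
        \<and> S \<in> M \<and> (gse T k \<longleftrightarrow> gse S k'))"

end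

theory Submission
  imports Defs
begin

lemma conf_fin_ne:
  assumes "wf_spin S"
  shows "finite (conf S)" "conf S \<noteq> {}"
proof -
  have fin: "finite (sV S)" and q: "sq S \<ge> 2" using assms by (auto simp: wf_spin_def)
  have "conf S = {s. \<forall>x. (x \<in> sV S \<longrightarrow> s x \<in> {..<sq S}) \<and> (x \<notin> sV S \<longrightarrow> s x = 0)}"
    by (auto simp: conf_def cfgs_def)
  then show "finite (conf S)" using finite_set_of_finite_funs[OF fin, of "{..<sq S}" 0] by simp
  have "(\<lambda>_. 0) \<in> conf S" using q by (auto simp: conf_def cfgs_def)
  then show "conf S \<noteq> {}" by blast
qed

lemma gse_iff:
  assumes "wf_spin S" shows "gse S k \<longleftrightarrow> (\<exists>s\<in>conf S. Ham S s < k)"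
  using conf_fin_ne[OF assms] by (simp add: gse_def Min_less_iff)

lemma key:
  assumes wS: "wf_spin S" and wT: "wf_spin T" and sim: "is_simulation S T f"
    and kd: "k \<le> sDelta f"
  shows "gse T k \<longleftrightarrow> gse S (k + sGamma f)"
proof
  assume "gse T k"
  then obtain t where t: "t \<in> conf T" "Ham T t < k" using gse_iff[OF wT] by blast
  have ne: "senc f \<noteq> []" and d: "sd f \<ge> 1" using sim by (auto simp: is_simulation_def)
  have "card (simset S T f 0 t) = sd f" using sim t kd ne by (auto simp: is_simulation_def)
  with d have "simset S T f 0 t \<noteq> {}" by auto
  then obtain s where s: "s \<in> simset S T f 0 t" by blast
  have "Ham S s - sGamma f = Ham T t" using sim s t ne by (auto simp: is_simulation_def)
  moreover have "s \<in> conf S" using s by (simp add: simset_def)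
  ultimately show "gse S (k + sGamma f)" using gse_iff[OF wS] t by force
next
  assume "gse S (k + sGamma f)"
  then obtain s where s: "s \<in> conf S" "Ham S s < k + sGamma f" using gse_iff[OF wS] by blast
  show "gse T k"
  proof (cases "\<exists>i<length (senc f). \<exists>t\<in>conf T. s \<in> simset S T f i t")
    case True
    then obtain i t where it: "i < length (senc f)" "t \<in> conf T" "s \<in> simset S T f i t" by blast
    have "Ham S s - sGamma f = Ham T t" using sim it by (auto simp: is_simulation_def)
    then show ?thesis using gse_iff[OF wT] it s by force
  next
    case False
    then have "Ham S s - sGamma f \<ge> sDelta f" using sim s by (auto simp: is_simulation_def)
    then show ?thesis using s kd by simp
  qed
qed

definition "Oprog A = PComp A (PFork PFst
   (PComp (PPrim PAdd) (PFork (PComp (PPrim PMul) (PFork PSnd PSnd)) (PInt 1))))"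

definition "Rprog A = PFork (PComp PFst (Oprog A))
   (PComp (PPrim PAdd) (PFork PSnd (PComp PFst (PComp PSnd (PComp PSnd (Oprog A))))))"

lemma ev_comp': "ev q v w n \<Longrightarrow> ev p w u m \<Longrightarrow> N = n + m + 1 \<Longrightarrow> ev (PComp p q) v u N"
  using ev_comp by blast
lemma ev_fork': "ev p v a n \<Longrightarrow> ev q v b m \<Longrightarrow> N = n + m + 1 \<Longrightarrow> ev (PFork p q) v (VPair a b) N"
  using ev_fork by blast
lemma ev_add: "ev (PPrim PAdd) (VPair (VNum x) (VNum y)) (VNum (x+y)) 1"
  by (rule ev_prim) simp
lemma ev_mul: "ev (PPrim PMul) (VPair (VNum x) (VNum y)) (VNum (x*y)) 1"
  by (rule ev_prim) simp
lemma ev_one: "ev (PInt 1) v (VNum 1) 1"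
  using ev_int[of 1 v] by simp

lemma ev_O:
  assumes "ev A (VPair eT (VNum (k*k+1))) out n"
  shows "ev (Oprog A) (VPair eT (VNum k)) out (n + 12)"
  unfolding Oprog_def
  by (rule ev_comp'[OF ev_fork'[OF ev_fst ev_comp'[OF ev_fork'[OF ev_comp'[OF ev_fork'[OF ev_snd ev_snd] ev_mul] ev_one] ev_add]] assms]) simp_all

lemma ev_R:
  assumes "ev A (VPair eT (VNum (k*k+1))) (VPair eS (VPair (VNum D) (VPair (VNum G) rest))) n"
  shows "ev (Rprog A) (VPair eT (VNum k)) (VPair eS (VNum (k + G))) (2*n + 37)"
proof -
  note O = ev_O[OF assms]
  have a: "ev (PComp PFst (Oprog A)) (VPair eT (VNum k)) eS (n + 14)"
    by (rule ev_comp'[OF O ev_fst]) simp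
  have b: "ev (PComp PSnd (Oprog A)) (VPair eT (VNum k)) (VPair (VNum D) (VPair (VNum G) rest)) (n + 14)"
    by (rule ev_comp'[OF O ev_snd]) simp
  have c: "ev (PComp PSnd (PComp PSnd (Oprog A))) (VPair eT (VNum k)) (VPair (VNum G) rest) (n + 16)"
    by (rule ev_comp'[OF b ev_snd]) simp
  have d: "ev (PComp PFst (PComp PSnd (PComp PSnd (Oprog A)))) (VPair eT (VNum k)) (VNum G) (n + 18)"
    by (rule ev_comp'[OF c ev_fst]) simp
  have e: "ev (PFork PSnd (PComp PFst (PComp PSnd (PComp PSnd (Oprog A))))) (VPair eT (VNum k)) (VPair (VNum k) (VNum G)) (n + 20)"
    by (rule ev_fork'[OF ev_snd d]) simp
  have f: "ev (PComp (PPrim PAdd) (PFork PSnd (PComp PFst (PComp PSnd (PComp PSnd (Oprog A)))))) (VPair eT (VNum k)) (VNum (k+G)) (n + 22)"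
    by (rule ev_comp'[OF e ev_add]) simp
  show ?thesis unfolding Rprog_def
    by (rule ev_fork'[OF a f]) simp
qed

theorem mainTheorem4:
  fixes M M' :: "spin_sys set" and A :: prog
  assumes "spin_model M" and "spin_model M'"
    and "emulation M M' A"
  shows "\<exists>R. poly_reduction M' M R"
proof -
  obtain a b :: nat where ab: "\<forall>T\<in>M'. \<forall>\<delta>::real. \<delta> \<ge> 0 \<longrightarrow>
        (\<exists>S f n. ev A (VPair (enc_sys T) (VNum \<delta>)) (VPair (enc_sys S) (enc_sim S T f)) n
           \<and> n \<le> a * (ssize T + 1) ^ b
           \<and> S \<in> M \<and> is_simulation S T f \<and> sDelta f \<ge> \<delta>)"
    using assms(3) unfolding emulation_def by (elim conjE exE) blast
  have "poly_reduction M' M (Rprog A)"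
    unfolding poly_reduction_def
  apply (rule exI[of _ "2*a+37"], rule exI[of _ b])
  proof (intro ballI allI)
    fix T k assume T: "T \<in> M'"
    have "k*k+1 \<ge> (0::real)" by (simp add: add_nonneg_nonneg)
    then obtain S f n where Sf: "ev A (VPair (enc_sys T) (VNum (k*k+1))) (VPair (enc_sys S) (enc_sim S T f)) n"
      "n \<le> a * (ssize T + 1) ^ b" "S \<in> M" "is_simulation S T f" "sDelta f \<ge> k*k+1"
      using ab T by blast
    have kd: "k \<le> sDelta f"
    proof -
      have "k \<le> k*k+1" by (smt (verit) mult_le_cancel_right1 zero_le_square)
      then show ?thesis using Sf(5) by linarith
    qed
    have wS: "wf_spin S" using assms(1) Sf(3) by (simp add: spin_model_def)
    have wT: "wf_spin T" using assms(2) T by (simp add: spin_model_def)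
    obtain rest where enc: "enc_sim S T f = VPair (VNum (sDelta f)) (VPair (VNum (sGamma f)) rest)"
      by (simp add: enc_sim_def enc_list_def)
    have ev: "ev (Rprog A) (enc_inst T k) (enc_inst S (k + sGamma f)) (2*n+37)"
      using ev_R[of A "enc_sys T" k "enc_sys S"] Sf(1) enc by (simp add: enc_inst_def)
    have p: "(1::nat) \<le> (ssize T + 1) ^ b" by simp
    have "2*n+37 \<le> 2*(a * (ssize T + 1) ^ b) + 37 * (ssize T + 1) ^ b"
      using Sf(2) p by linarith
    also have "\<dots> = (2*a+37) * (ssize T + 1) ^ b" by (simp add: algebra_simps)
    finally have bd: "2*n+37 \<le> (2*a+37) * (ssize T + 1) ^ b" .
    show "\<exists>S k' n. ev (Rprog A) (enc_inst T k) (enc_inst S k') n \<and> n \<le> (2*a+37) * (ssize T + 1) ^ b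
        \<and> S \<in> M \<and> (gse T k \<longleftrightarrow> gse S k')"
      using ev bd Sf(3) key[OF wS wT Sf(4) kd] by blast
  qed
  then show ?thesis by blast
qed

end
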